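(* Let $(M,(I,C),L)$ be a circuit-generating abstract machine with $M$ well-typed of type $\mathtt{bit}^m$ in a context of variables of type $\mathtt{bit}$, and suppose $(M,(I,C),L)\to_{am}(N,(I,C'),L')$. Let $\vec u=(u_i)_{i\in I}$ be a family of booleans. Then one of the following holds: the rewrite step is one eliminating a boolean constant $\mathtt{tt}$ or $\mathtt{ff}$ and $T(M,(I,C),L)(\vec u)$ is equal to $T(N,(I,C'),L')(\vec u)$; or $T(M,(I,C),L)(\vec u)\to T(N,(I,C'),L')(\vec u)$ in one step of the small-step relation; or $N$ contains the term $\mathtt{Err}$.
   Context: **Language $\mathbf{PCF}^{\mathbf{list}}$.** Terms: $M,N,P::= x \mid \lambda x.M \mid MN \mid \langle M,N\rangle \mid \pi_1(M)\mid\pi_2(M)\mid \mathtt{skip}\mid \mathtt{let}\ \mathtt{skip}=M\ \mathtt{in}\ N \mid \mathtt{tt}\mid\mathtt{ff}\mid \mathtt{if}\ M\ \mathtt{then}\ N\ \mathtt{else}\ P \mid \mathtt{and}\mid\mathtt{xor}\mid\mathtt{not}\mid \mathtt{inj}_1(M)\mid\mathtt{inj}_2(M)\mid \mathtt{match}\ P\ \mathtt{with}\ (x\mapsto M\mid y\mapsto N)\mid \mathtt{split}\mid Y(M)\mid \mathtt{Err}$. Types: $A,B::=\mathtt{bit}\mid A\oplus B\mid A\times B\mid \mathbf 1\mid A\to B\mid [A]$. Typing rules (context $\Delta$): $\Delta,x:A\vdash x:A$; $\mathtt{tt},\mathtt{ff}:\mathtt{bit}$; $\mathtt{skip}:\mathbf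 1$; $\mathtt{Err}:A$ for any $A$; $\mathtt{not}:\mathtt{bit}\to\mathtt{bit}$; $\mathtt{and},\mathtt{xor}:\mathtt{bit}\times\mathtt{bit}\to\mathtt{bit}$; $\mathtt{split}:[A]\to\mathbf 1\oplus(A\times[A])$; the usual rules for $\lambda$, application, pairs, projections, injections, $\mathtt{let}\ \mathtt{skip}$, and $\mathtt{match}$; if $\Delta\vdash M:\mathbf 1\oplus(A\times[A])$ then $\Delta\vdash M:[A]$; if $\Delta\vdash M:A\to A$ then $\Delta\vdash Y(M):A$; $\mathtt{if}\ P\ \mathtt{then}\ M\ \mathtt{else}\ N : C$ when $P:\mathtt{bit}$, $M,N:C$ and $C$ is first-order ($C::=\mathtt{bit}\mid C\times C\mid [C]$). Notation: $[M_1,\ldots,M_n]=\mathtt{inj}_2\langle M_1,\cdots\mathtt{inj}_2\langle M_n,\mathtt{inj}_1(\mathtt{skip})\rangle\rangle$, $\langle M_1,\ldots,M_n\rangle=\langle M_1,\langle\ldots,M_n\rangle\rangle$, $\mathtt{bit}^m$ the $m$-fold right-nested product of $\mathtt{bit}$. **Small-step semantics $\to$:** the smallest relation closed under arbitrary subterm contexts containing $(\lambda x.M)N\to M[N/x]$; $\pi_i\langle M_1,M_2\rangle\to M_i$; $\mathtt{let}\ \mathtt{skip}=\mathtt{skip}\ \mathtt{in}\ M\to M$; $\mathtt{if}\ \mathtt{tt}\ \mathtt{then}\ M\ \mathtt{else}\ N\to M$; $\mathtt{if}\ \mathtt{ff}\ \mathtt{then}\ M\ \mathtt{else}\ N\to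 N$; $\mathtt{split}\,M\to M$; $\mathtt{match}\ \mathtt{inj}_i(P)\ \mathtt{with}\ (x_1\mapsto M_1\mid x_2\mapsto M_2)\to M_i[P/x_i]$; $Y(M)\to M(Y(M))$; and the evident rules computing $\mathtt{not},\mathtt{and},\mathtt{xor}$ on the constants $\mathtt{tt},\mathtt{ff}$. $\mathtt{Err}$ does not reduce. **Reversible circuits.** A gate is $\mathrm{cnot}_i(b_1^{j_1}\ldots b_r^{j_r})$ with $i,j_1,\ldots,j_r$ natural numbers, $i\neq j_k$, $b_k$ booleans (written $\mathrm{not}_i$ if $r=0$); $\mathrm{wires}(C)$ is the set of all indices occurring in the gates of a list $C$. A circuit is $(I,C,O)$ with $C$ a list of gates and $I,O$ sets of wires. Executing $\mathrm{cnot}_i(b_1^{j_1}\ldots b_r^{j_r})$ on a valuation $v$ gives $w$ with $w_l=v_l$ for $l\neq i$ and $w_i=v_i\ \mathtt{xor}\ \bigwedge_{k}(v_{j_k}\ \mathtt{xor}\ b_k\ \mathtt{xor}\ \mathtt{tt})$ ($w_i=\mathtt{not}(v_i)$ if $r=0$). Executing $(I,C,O)$ on $(x_i)_{i\in I}$: set $v_k=x_k$ for $k\in I$ and $v_k=\mathtt{ff}$ otherwise, execute the gates of $C$ in reverse list order, return $(v_k)_{k\in O}$. **Abstract machines.** A circuit-generating abstract machine is $(M,(I,C),L)$ with $p_1:\mathtt{bit},\ldots,p_{n+k}:\mathtt{bit}\vdash M:\mathtt{bit}^m$, $I=\{1,\ldots,n\}$, $C$ a list of gates, $L$ a one-to-one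 map from the free variables of $M$ onto wires in $\mathrm{wires}(C)\cup I$. A first-order extension of $L$ is a term built from variables in the domain of $L$ using tuples and list literals; two have the same shape if both are tuples of equal size or lists of equal length with componentwise same shape. Beta-contexts $E[-]$ are one-hole contexts with the hole in any immediate subterm position of any constructor. $\to_{am}$: $(E[R],RC,L)\to_{am}(E[R'],RC,L)$ for $(\lambda x.M)N\mapsto M[N/x]$, $\pi_i\langle M_1,M_2\rangle\mapsto M_i$, $\mathtt{let}\ \mathtt{skip}=\mathtt{skip}\ \mathtt{in}\ M\mapsto M$, $\mathtt{split}\,M\mapsto M$, $\mathtt{match}\ \mathtt{inj}_i(P)\ldots\mapsto M_i[P/x_i]$, $Y(M)\mapsto M(Y(M))$; and the boolean rules, with $i_0$ a new wire, $p_{i_0}$ fresh, $L'=L\cup\{p_{i_0}\mapsto i_0\}$, $G::(I,C)=(I,G::C)$: $(E[\mathtt{ff}],RC,L)\to_{am}(E[p_{i_0}],RC,L')$; $(E[\mathtt{tt}],RC,L)\to_{am}(E[p_{i_0}],\mathrm{not}_{i_0}::RC,L')$; $(E[\mathtt{not}\ p_i],RC,L)\to_{am}(E[p_{i_0}],\mathrm{cnot}_{i_0}(\mathtt{ff}^{L(p_i)})::RC,L')$; $(E[\mathtt{and}\ p_i\ p_j],RC,L)\to_{am}(E[p_{i_0}],\mathrm{cnot}_{i_0}(\mathtt{tt}^{L(p_i)}\mathtt{tt}^{L(p_j)})::RC,L')$; $(E[\mathtt{xor}\ p_i\ p_j],RC,L)\to_{am}(E[p_{i_0}],\mathrm{cnot}_{i_0}(\mathtt{tt}^{L(p_i)})::\mathrm{cnot}_{i_0}(\mathtt{tt}^{L(p_j)})::RC,L')$;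 and for first-order extensions $V,W$ of $L$ of the same shape, $(E[\mathtt{if}\ p_i\ \mathtt{then}\ V\ \mathtt{else}\ W],RC,L)\to_{am}(E[U],RC',L'')$ where $U$ has the same shape with fresh pairwise-distinct variables $u_1,\ldots,u_r$ mapped by $L''\supseteq L$ to new distinct wires, and, with $v_j,w_j$ the corresponding variables of $V,W$, $RC'$ is $RC$ extended with the gates $\mathrm{cnot}_{u_j}(\mathtt{tt}^{p_i}\mathtt{tt}^{v_j})$ and $\mathrm{cnot}_{u_j}(\mathtt{ff}^{p_i}\mathtt{tt}^{w_j})$ (variables standing for their wires); if $V,W$ do not have the same shape it steps to $E[\mathtt{Err}]$. **Readback.** For $(M,(I,C),L)$ and $\vec u=(u_i)_{i\in I}$, let $v$ be the final valuation from executing $(I,C,\mathrm{Range}(L))$ on $\vec u$; $T(M,(I,C),L)(\vec u)$ is $M$ with each free variable $x$ replaced by the boolean constant $v_{L(x)}$. *)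

theory Defs
  imports Main
begin

section \<open>Syntax of PCF-list (locally de Bruijn: bound variables are indices, free variables p_i are FVar i)\<close>

datatype ty = TBit | TSum ty ty | TProd ty ty | TUnit | TArrow ty ty | TList ty

datatype tm =
    Var nat
  | FVar nat
  | Lam tm
  | App tm tm
  | Pair tm tm
  | Proj1 tm
  | Proj2 tm
  | Skip
  | LetSkip tm tm
  | Tt
  | Ff
  | If tm tm tm
  | And
  | Xor
  | Not
  | Inj1 tm
  | Inj2 tm
  | Match tm tm tm     \<comment> \<open>match P with (x |-> M | y |-> N); each branch binds index 0\<close>
  | Split
  | Y tm
  | Err

fun bconst :: "bool \<Rightarrow> tm" where
  "bconst True = Tt"
| "bconst False = Ff"

fun bitpow :: "nat \<Rightarrow> ty" where
  "bitpow 0 = TUnit"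
| "bitpow (Suc 0) = TBit"
| "bitpow (Suc (Suc m)) = TProd TBit (bitpow (Suc m))"

inductive first_order :: "ty \<Rightarrow> bool" where
  "first_order TBit"
| "first_order A \<Longrightarrow> first_order B \<Longrightarrow> first_order (TProd A B)"
| "first_order A \<Longrightarrow> first_order (TList A)"

inductive typing :: "(nat \<Rightarrow> ty option) \<Rightarrow> ty list \<Rightarrow> tm \<Rightarrow> ty \<Rightarrow> bool" where
  t_var: "i < length \<Gamma> \<Longrightarrow> typing \<Delta> \<Gamma> (Var i) (\<Gamma> ! i)"
| t_fvar: "\<Delta> x = Some A \<Longrightarrow> typing \<Delta> \<Gamma> (FVar x) A"
| t_lam: "typing \<Delta> (A # \<Gamma>) M B \<Longrightarrow> typing \<Delta> \<Gamma> (Lam M) (TArrow A B)"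
| t_app: "typing \<Delta> \<Gamma> M (TArrow A B) \<Longrightarrow> typing \<Delta> \<Gamma> N A \<Longrightarrow> typing \<Delta> \<Gamma> (App M N) B"
| t_pair: "typing \<Delta> \<Gamma> M A \<Longrightarrow> typing \<Delta> \<Gamma> N B \<Longrightarrow> typing \<Delta> \<Gamma> (Pair M N) (TProd A B)"
| t_proj1: "typing \<Delta> \<Gamma> M (TProd A B) \<Longrightarrow> typing \<Delta> \<Gamma> (Proj1 M) A"
| t_proj2: "typing \<Delta> \<Gamma> M (TProd A B) \<Longrightarrow> typing \<Delta> \<Gamma> (Proj2 M) B"
| t_skip: "typing \<Delta> \<Gamma> Skip TUnit"
| t_letskip: "typing \<Delta> \<Gamma> M TUnit \<Longrightarrow> typing \<Delta> \<Gamma> N A \<Longrightarrow> typing \<Delta> \<Gamma> (LetSkip M N) A"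
| t_tt: "typing \<Delta> \<Gamma> Tt TBit"
| t_ff: "typing \<Delta> \<Gamma> Ff TBit"
| t_if: "typing \<Delta> \<Gamma> P TBit \<Longrightarrow> typing \<Delta> \<Gamma> M C \<Longrightarrow> typing \<Delta> \<Gamma> N C \<Longrightarrow> first_order C
         \<Longrightarrow> typing \<Delta> \<Gamma> (If P M N) C"
| t_and: "typing \<Delta> \<Gamma> And (TArrow (TProd TBit TBit) TBit)"
| t_xor: "typing \<Delta> \<Gamma> Xor (TArrow (TProd TBit TBit) TBit)"
| t_not: "typing \<Delta> \<Gamma> Not (TArrow TBit TBit)"
| t_inj1: "typing \<Delta> \<Gamma> M A \<Longrightarrow> typing \<Delta> \<Gamma> (Inj1 M) (TSum A B)"
| t_inj2: "typing \<Delta> \<Gamma> M B \<Longrightarrow> typing \<Delta> \<Gamma> (Inj2 M) (TSum A B)"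
| t_match: "typing \<Delta> \<Gamma> P (TSum A B) \<Longrightarrow> typing \<Delta> (A # \<Gamma>) M C \<Longrightarrow> typing \<Delta> (B # \<Gamma>) N C
         \<Longrightarrow> typing \<Delta> \<Gamma> (Match P M N) C"
| t_split: "typing \<Delta> \<Gamma> Split (TArrow (TList A) (TSum TUnit (TProd A (TList A))))"
| t_fold: "typing \<Delta> \<Gamma> M (TSum TUnit (TProd A (TList A))) \<Longrightarrow> typing \<Delta> \<Gamma> M (TList A)"
| t_Y: "typing \<Delta> \<Gamma> M (TArrow A A) \<Longrightarrow> typing \<Delta> \<Gamma> (Y M) A"
| t_err: "typing \<Delta> \<Gamma> Err A"

fun lift :: "nat \<Rightarrow> tm \<Rightarrow> tm" where
  "lift k (Var i) = (if i < k then Var i else Var (Suc i))"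
| "lift k (FVar x) = FVar x"
| "lift k (Lam M) = Lam (lift (Suc k) M)"
| "lift k (App M N) = App (lift k M) (lift k N)"
| "lift k (Pair M N) = Pair (lift k M) (lift k N)"
| "lift k (Proj1 M) = Proj1 (lift k M)"
| "lift k (Proj2 M) = Proj2 (lift k M)"
| "lift k Skip = Skip"
| "lift k (LetSkip M N) = LetSkip (lift k M) (lift k N)"
| "lift k Tt = Tt"
| "lift k Ff = Ff"
| "lift k (If P M N) = If (lift k P) (lift k M) (lift k N)"
| "lift k And = And"
| "lift k Xor = Xor"
| "lift k Not = Not"
| "lift k (Inj1 M) = Inj1 (lift k M)"
| "lift k (Inj2 M) = Inj2 (lift k M)"
| "lift k (Match P M N) = Match (lift k P) (lift (Suc k) M) (lift (Suc k) N)"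
| "lift k Split = Split"
| "lift k (Y M) = Y (lift k M)"
| "lift k Err = Err"

fun subst :: "tm \<Rightarrow> nat \<Rightarrow> tm \<Rightarrow> tm" where
  "subst (Var i) k S = (if i < k then Var i else if i = k then S else Var (i - 1))"
| "subst (FVar x) k S = FVar x"
| "subst (Lam M) k S = Lam (subst M (Suc k) (lift 0 S))"
| "subst (App M N) k S = App (subst M k S) (subst N k S)"
| "subst (Pair M N) k S = Pair (subst M k S) (subst N k S)"
| "subst (Proj1 M) k S = Proj1 (subst M k S)"
| "subst (Proj2 M) k S = Proj2 (subst M k S)"
| "subst Skip k S = Skip"
| "subst (LetSkip M N) k S = LetSkip (subst M k S) (subst N k S)"
| "subst Tt k S = Tt"
| "subst Ff k S = Ff"
| "subst (If P M N) k S = If (subst P k S) (subst M k S) (subst N k S)"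
| "subst And k S = And"
| "subst Xor k S = Xor"
| "subst Not k S = Not"
| "subst (Inj1 M) k S = Inj1 (subst M k S)"
| "subst (Inj2 M) k S = Inj2 (subst M k S)"
| "subst (Match P M N) k S = Match (subst P k S) (subst M (Suc k) (lift 0 S)) (subst N (Suc k) (lift 0 S))"
| "subst Split k S = Split"
| "subst (Y M) k S = Y (subst M k S)"
| "subst Err k S = Err"

fun leaves :: "tm \<Rightarrow> nat list" where
  "leaves (Var i) = []"
| "leaves (FVar x) = [x]"
| "leaves (Lam M) = leaves M"
| "leaves (App M N) = leaves M @ leaves N"
| "leaves (Pair M N) = leaves M @ leaves N"
| "leaves (Proj1 M) = leaves M"
| "leaves (Proj2 M) = leaves M"
| "leaves Skip = []"
| "leaves (LetSkip M N) = leaves M @ leaves N"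
| "leaves Tt = []"
| "leaves Ff = []"
| "leaves (If P M N) = leaves P @ leaves M @ leaves N"
| "leaves And = []"
| "leaves Xor = []"
| "leaves Not = []"
| "leaves (Inj1 M) = leaves M"
| "leaves (Inj2 M) = leaves M"
| "leaves (Match P M N) = leaves P @ leaves M @ leaves N"
| "leaves Split = []"
| "leaves (Y M) = leaves M"
| "leaves Err = []"

definition fvs :: "tm \<Rightarrow> nat set" where
  "fvs M = set (leaves M)"

fun fsubst :: "(nat \<Rightarrow> tm) \<Rightarrow> tm \<Rightarrow> tm" where
  "fsubst f (Var i) = Var i"
| "fsubst f (FVar x) = f x"
| "fsubst f (Lam M) = Lam (fsubst f M)"
| "fsubst f (App M N) = App (fsubst f M) (fsubst f N)"
| "fsubst f (Pair M N) = Pair (fsubst f M) (fsubst f N)"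
| "fsubst f (Proj1 M) = Proj1 (fsubst f M)"
| "fsubst f (Proj2 M) = Proj2 (fsubst f M)"
| "fsubst f Skip = Skip"
| "fsubst f (LetSkip M N) = LetSkip (fsubst f M) (fsubst f N)"
| "fsubst f Tt = Tt"
| "fsubst f Ff = Ff"
| "fsubst f (If P M N) = If (fsubst f P) (fsubst f M) (fsubst f N)"
| "fsubst f And = And"
| "fsubst f Xor = Xor"
| "fsubst f Not = Not"
| "fsubst f (Inj1 M) = Inj1 (fsubst f M)"
| "fsubst f (Inj2 M) = Inj2 (fsubst f M)"
| "fsubst f (Match P M N) = Match (fsubst f P) (fsubst f M) (fsubst f N)"
| "fsubst f Split = Split"
| "fsubst f (Y M) = Y (fsubst f M)"
| "fsubst f Err = Err"

definition skel :: "tm \<Rightarrow> tm" where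
  "skel M = fsubst (\<lambda>_. FVar 0) M"

inductive has_err :: "tm \<Rightarrow> bool" where
  "has_err Err"
| "has_err M \<Longrightarrow> has_err (Lam M)"
| "has_err M \<or> has_err N \<Longrightarrow> has_err (App M N)"
| "has_err M \<or> has_err N \<Longrightarrow> has_err (Pair M N)"
| "has_err M \<Longrightarrow> has_err (Proj1 M)"
| "has_err M \<Longrightarrow> has_err (Proj2 M)"
| "has_err M \<or> has_err N \<Longrightarrow> has_err (LetSkip M N)"
| "has_err P \<or> has_err M \<or> has_err N \<Longrightarrow> has_err (If P M N)"
| "has_err M \<Longrightarrow> has_err (Inj1 M)"
| "has_err M \<Longrightarrow> has_err (Inj2 M)"
| "has_err P \<or> has_err M \<or> has_err N \<Longrightarrow> has_err (Match P M N)"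
| "has_err M \<Longrightarrow> has_err (Y M)"

datatype ctx =
    Hole
  | CLam ctx
  | CAppL ctx tm | CAppR tm ctx
  | CPairL ctx tm | CPairR tm ctx
  | CProj1 ctx | CProj2 ctx
  | CLetL ctx tm | CLetR tm ctx
  | CIf1 ctx tm tm | CIf2 tm ctx tm | CIf3 tm tm ctx
  | CInj1 ctx | CInj2 ctx
  | CMatch1 ctx tm tm | CMatch2 tm ctx tm | CMatch3 tm tm ctx
  | CY ctx

fun plug :: "ctx \<Rightarrow> tm \<Rightarrow> tm" where
  "plug Hole R = R"
| "plug (CLam E) R = Lam (plug E R)"
| "plug (CAppL E N) R = App (plug E R) N"
| "plug (CAppR M E) R = App M (plug E R)"
| "plug (CPairL E N) R = Pair (plug E R) N"
| "plug (CPairR M E) R = Pair M (plug E R)"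
| "plug (CProj1 E) R = Proj1 (plug E R)"
| "plug (CProj2 E) R = Proj2 (plug E R)"
| "plug (CLetL E N) R = LetSkip (plug E R) N"
| "plug (CLetR M E) R = LetSkip M (plug E R)"
| "plug (CIf1 E M N) R = If (plug E R) M N"
| "plug (CIf2 P E N) R = If P (plug E R) N"
| "plug (CIf3 P M E) R = If P M (plug E R)"
| "plug (CInj1 E) R = Inj1 (plug E R)"
| "plug (CInj2 E) R = Inj2 (plug E R)"
| "plug (CMatch1 E M N) R = Match (plug E R) M N"
| "plug (CMatch2 P E N) R = Match P (plug E R) N"
| "plug (CMatch3 P M E) R = Match P M (plug E R)"
| "plug (CY E) R = Y (plug E R)"

text \<open>Redexes shared by the small-step semantics and the abstract machine\<close>
inductive pure_redex :: "tm \<Rightarrow> tm \<Rightarrow> bool" where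
  "pure_redex (App (Lam M) N) (subst M 0 N)"
| "pure_redex (Proj1 (Pair M1 M2)) M1"
| "pure_redex (Proj2 (Pair M1 M2)) M2"
| "pure_redex (LetSkip Skip M) M"
| "pure_redex (App Split M) M"
| "pure_redex (Match (Inj1 P) M1 M2) (subst M1 0 P)"
| "pure_redex (Match (Inj2 P) M1 M2) (subst M2 0 P)"
| "pure_redex (Y M) (App M (Y M))"

inductive redex :: "tm \<Rightarrow> tm \<Rightarrow> bool" where
  "pure_redex R R' \<Longrightarrow> redex R R'"
| "redex (If Tt M N) M"
| "redex (If Ff M N) N"
| "redex (App Not (bconst a)) (bconst (\<not> a))"
| "redex (App And (Pair (bconst a) (bconst b))) (bconst (a \<and> b))"
| "redex (App Xor (Pair (bconst a) (bconst b))) (bconst (a \<noteq> b))"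

inductive step :: "tm \<Rightarrow> tm \<Rightarrow> bool" where
  "redex R R' \<Longrightarrow> step (plug E R) (plug E R')"

text \<open>Gate target [(b_1, j_1), ..., (b_r, j_r)] is cnot_target(b_1^{j_1} ... b_r^{j_r})\<close>
datatype gate = Gate nat "(bool \<times> nat) list"

fun wf_gate :: "gate \<Rightarrow> bool" where
  "wf_gate (Gate i cs) = (\<forall>(b, j) \<in> set cs. i \<noteq> j)"

fun gate_wires :: "gate \<Rightarrow> nat set" where
  "gate_wires (Gate i cs) = insert i (snd ` set cs)"

definition wires :: "gate list \<Rightarrow> nat set" where
  "wires C = (\<Union>g \<in> set C. gate_wires g)"

fun exec_gate :: "gate \<Rightarrow> (nat \<Rightarrow> bool) \<Rightarrow> (nat \<Rightarrow> bool)" where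
  "exec_gate (Gate i cs) v =
     v(i := (v i \<noteq> (\<forall>(b, j) \<in> set cs. ((v j \<noteq> b) \<noteq> True))))"

text \<open>Execute the gates of C in reverse list order (last element first)\<close>
definition exec_gates :: "gate list \<Rightarrow> (nat \<Rightarrow> bool) \<Rightarrow> (nat \<Rightarrow> bool)" where
  "exec_gates C v = foldr exec_gate C v"

definition final_val :: "nat \<Rightarrow> gate list \<Rightarrow> (nat \<Rightarrow> bool) \<Rightarrow> (nat \<Rightarrow> bool)" where
  "final_val n C u = exec_gates C (\<lambda>k. if k \<in> {1..n} then u k else False)"

section \<open>Circuit-generating abstract machine, I = {1..n}\<close>

definition new_wire :: "nat \<Rightarrow> gate list \<Rightarrow> (nat \<rightharpoonup> nat) \<Rightarrow> nat \<Rightarrow> bool" where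
  "new_wire n C L i = (i \<notin> wires C \<and> i \<notin> {1..n} \<and> i \<notin> ran L)"

text \<open>First-order extensions of L: variables of dom L, tuples (nested pairs) and list literals\<close>
inductive fo_ext :: "(nat \<rightharpoonup> nat) \<Rightarrow> tm \<Rightarrow> bool" and fo_list :: "(nat \<rightharpoonup> nat) \<Rightarrow> tm \<Rightarrow> bool" where
  "x \<in> dom L \<Longrightarrow> fo_ext L (FVar x)"
| "fo_ext L V \<Longrightarrow> fo_ext L W \<Longrightarrow> fo_ext L (Pair V W)"
| "fo_list L V \<Longrightarrow> fo_ext L V"
| "fo_list L (Inj1 Skip)"
| "fo_ext L V \<Longrightarrow> fo_list L W \<Longrightarrow> fo_list L (Inj2 (Pair V W))"

definition same_shape :: "tm \<Rightarrow> tm \<Rightarrow> bool" where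
  "same_shape V W = (skel V = skel W)"

datatype step_kind = ConstElim | OtherStep

type_synonym am_state = "tm \<times> gate list \<times> (nat \<rightharpoonup> nat)"

inductive am_redex :: "nat \<Rightarrow> am_state \<Rightarrow> step_kind \<Rightarrow> am_state \<Rightarrow> bool" where
  am_pure: "pure_redex R R' \<Longrightarrow> am_redex n (R, C, L) OtherStep (R', C, L)"
| am_ff: "new_wire n C L i0 \<Longrightarrow> i0 \<notin> dom L \<Longrightarrow>
     am_redex n (Ff, C, L) ConstElim (FVar i0, C, L(i0 \<mapsto> i0))"
| am_tt: "new_wire n C L i0 \<Longrightarrow> i0 \<notin> dom L \<Longrightarrow>
     am_redex n (Tt, C, L) ConstElim (FVar i0, Gate i0 [] # C, L(i0 \<mapsto> i0))"
| am_not: "new_wire n C L i0 \<Longrightarrow> i0 \<notin> dom L \<Longrightarrow> L x = Some a \<Longrightarrow>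
     am_redex n (App Not (FVar x), C, L) OtherStep
       (FVar i0, Gate i0 [(False, a)] # C, L(i0 \<mapsto> i0))"
| am_and: "new_wire n C L i0 \<Longrightarrow> i0 \<notin> dom L \<Longrightarrow> L x = Some a \<Longrightarrow> L y = Some b \<Longrightarrow>
     am_redex n (App And (Pair (FVar x) (FVar y)), C, L) OtherStep
       (FVar i0, Gate i0 [(True, a), (True, b)] # C, L(i0 \<mapsto> i0))"
| am_xor: "new_wire n C L i0 \<Longrightarrow> i0 \<notin> dom L \<Longrightarrow> L x = Some a \<Longrightarrow> L y = Some b \<Longrightarrow>
     am_redex n (App Xor (Pair (FVar x) (FVar y)), C, L) OtherStep
       (FVar i0, Gate i0 [(True, a)] # Gate i0 [(True, b)] # C, L(i0 \<mapsto> i0))"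
| am_if: "L x = Some a \<Longrightarrow> fo_ext L V \<Longrightarrow> fo_ext L W \<Longrightarrow> same_shape V W \<Longrightarrow>
     skel U = skel V \<Longrightarrow> leaves U = us \<Longrightarrow> distinct us \<Longrightarrow> set us \<inter> dom L = {} \<Longrightarrow>
     length ws = length us \<Longrightarrow> distinct ws \<Longrightarrow> (\<forall>w \<in> set ws. new_wire n C L w) \<Longrightarrow>
     C' = concat (map (\<lambda>(w, vj, wj). [Gate w [(True, a), (True, the (L vj))],
                                       Gate w [(False, a), (True, the (L wj))]])
                   (zip ws (zip (leaves V) (leaves W)))) @ C \<Longrightarrow>
     am_redex n (If (FVar x) V W, C, L) OtherStep (U, C', L ++ map_of (zip us ws))"
| am_if_err: "L x = Some a \<Longrightarrow> fo_ext L V \<Longrightarrow> fo_ext L W \<Longrightarrow> \<not> same_shape V W \<Longrightarrow>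
     am_redex n (If (FVar x) V W, C, L) OtherStep (Err, C, L)"

inductive am_step :: "nat \<Rightarrow> am_state \<Rightarrow> step_kind \<Rightarrow> am_state \<Rightarrow> bool" where
  "am_redex n (R, C, L) k (R', C', L') \<Longrightarrow> am_step n (plug E R, C, L) k (plug E R', C', L')"

definition is_machine :: "nat \<Rightarrow> nat \<Rightarrow> nat \<Rightarrow> tm \<Rightarrow> gate list \<Rightarrow> (nat \<rightharpoonup> nat) \<Rightarrow> bool" where
  "is_machine n k m M C L \<longleftrightarrow>
     1 \<le> m \<and>
     typing (\<lambda>x. if x \<in> {1..n+k} then Some TBit else None) [] M (bitpow m) \<and>
     (\<forall>g \<in> set C. wf_gate g) \<and>
     dom L = fvs M \<and> inj_on L (dom L) \<and> ran L \<subseteq> wires C \<union> {1..n}"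

definition readback :: "nat \<Rightarrow> gate list \<Rightarrow> (nat \<rightharpoonup> nat) \<Rightarrow> tm \<Rightarrow> (nat \<Rightarrow> bool) \<Rightarrow> tm" where
  "readback n C L M u =
     (let v = final_val n C u in
      fsubst (\<lambda>x. case L x of Some w \<Rightarrow> bconst (v w) | None \<Rightarrow> FVar x) M)"

end

theory Submission
  imports Defs
begin

definition rf :: "(nat \<rightharpoonup> nat) \<Rightarrow> (nat \<Rightarrow> bool) \<Rightarrow> nat \<Rightarrow> tm" where
  "rf L v x = (case L x of Some w \<Rightarrow> bconst (v w) | None \<Rightarrow> FVar x)"

lemma lift_bconst[simp]: "lift k (bconst b) = bconst b" by (cases b) auto
lemma subst_bconst[simp]: "subst (bconst b) k S = bconst b" by (cases b) auto
lemma fsubst_bconst[simp]: "fsubst f (bconst b) = bconst b" by (cases b) auto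

lemma rf_lift[simp]: "lift k (rf L v x) = rf L v x"
  by (auto simp: rf_def split: option.split)
lemma rf_subst[simp]: "subst (rf L v x) k S = rf L v x"
  by (auto simp: rf_def split: option.split)

lemma fsubst_lift:
  assumes "\<And>x k. lift k (f x) = f x"
  shows "fsubst f (lift k M) = lift k (fsubst f M)"
  by (induction M arbitrary: k) (simp_all add: assms)

lemma fsubst_subst:
  assumes "\<And>x k. lift k (f x) = f x" "\<And>x k S. subst (f x) k S = f x"
  shows "fsubst f (subst M k S) = subst (fsubst f M) k (fsubst f S)"
  by (induction M arbitrary: k S) (simp_all add: assms fsubst_lift)

lemma pure_redex_fsubst:
  assumes "pure_redex R R'" "\<And>x k. lift k (f x) = f x" "\<And>x k S. subst (f x) k S = f x"
  shows "pure_redex (fsubst f R) (fsubst f R')"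
  using assms(1)
  by (cases rule: pure_redex.cases) (auto simp: fsubst_subst[OF assms(2,3)] intro: pure_redex.intros)

fun cleaves :: "ctx \<Rightarrow> nat list" where
  "cleaves Hole = []"
| "cleaves (CLam E) = cleaves E"
| "cleaves (CAppL E N) = cleaves E @ leaves N"
| "cleaves (CAppR M E) = leaves M @ cleaves E"
| "cleaves (CPairL E N) = cleaves E @ leaves N"
| "cleaves (CPairR M E) = leaves M @ cleaves E"
| "cleaves (CProj1 E) = cleaves E"
| "cleaves (CProj2 E) = cleaves E"
| "cleaves (CLetL E N) = cleaves E @ leaves N"
| "cleaves (CLetR M E) = leaves M @ cleaves E"
| "cleaves (CIf1 E M N) = cleaves E @ leaves M @ leaves N"
| "cleaves (CIf2 P E N) = leaves P @ cleaves E @ leaves N"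
| "cleaves (CIf3 P M E) = leaves P @ leaves M @ cleaves E"
| "cleaves (CInj1 E) = cleaves E"
| "cleaves (CInj2 E) = cleaves E"
| "cleaves (CMatch1 E M N) = cleaves E @ leaves M @ leaves N"
| "cleaves (CMatch2 P E N) = leaves P @ cleaves E @ leaves N"
| "cleaves (CMatch3 P M E) = leaves P @ leaves M @ cleaves E"
| "cleaves (CY E) = cleaves E"

fun cfsubst :: "(nat \<Rightarrow> tm) \<Rightarrow> ctx \<Rightarrow> ctx" where
  "cfsubst f Hole = Hole"
| "cfsubst f (CLam E) = CLam (cfsubst f E)"
| "cfsubst f (CAppL E N) = CAppL (cfsubst f E) (fsubst f N)"
| "cfsubst f (CAppR M E) = CAppR (fsubst f M) (cfsubst f E)"
| "cfsubst f (CPairL E N) = CPairL (cfsubst f E) (fsubst f N)"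
| "cfsubst f (CPairR M E) = CPairR (fsubst f M) (cfsubst f E)"
| "cfsubst f (CProj1 E) = CProj1 (cfsubst f E)"
| "cfsubst f (CProj2 E) = CProj2 (cfsubst f E)"
| "cfsubst f (CLetL E N) = CLetL (cfsubst f E) (fsubst f N)"
| "cfsubst f (CLetR M E) = CLetR (fsubst f M) (cfsubst f E)"
| "cfsubst f (CIf1 E M N) = CIf1 (cfsubst f E) (fsubst f M) (fsubst f N)"
| "cfsubst f (CIf2 P E N) = CIf2 (fsubst f P) (cfsubst f E) (fsubst f N)"
| "cfsubst f (CIf3 P M E) = CIf3 (fsubst f P) (fsubst f M) (cfsubst f E)"
| "cfsubst f (CInj1 E) = CInj1 (cfsubst f E)"
| "cfsubst f (CInj2 E) = CInj2 (cfsubst f E)"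
| "cfsubst f (CMatch1 E M N) = CMatch1 (cfsubst f E) (fsubst f M) (fsubst f N)"
| "cfsubst f (CMatch2 P E N) = CMatch2 (fsubst f P) (cfsubst f E) (fsubst f N)"
| "cfsubst f (CMatch3 P M E) = CMatch3 (fsubst f P) (fsubst f M) (cfsubst f E)"
| "cfsubst f (CY E) = CY (cfsubst f E)"

lemma leaves_plug: "set (leaves (plug E R)) = set (cleaves E) \<union> set (leaves R)"
  by (induction E) auto

lemma fsubst_plug: "fsubst f (plug E R) = plug (cfsubst f E) (fsubst f R)"
  by (induction E) auto

lemma fsubst_cong: "(\<forall>x\<in>set (leaves M). f x = g x) \<Longrightarrow> fsubst f M = fsubst g M"
  by (induction M) auto

lemma cfsubst_cong: "(\<forall>x\<in>set (cleaves E). f x = g x) \<Longrightarrow> cfsubst f E = cfsubst g E"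
  by (induction E) (auto intro: fsubst_cong)

lemma has_err_plug: "has_err (plug E Err)"
  by (induction E) (auto intro: has_err.intros)

lemma length_leaves_skel: "length (leaves (fsubst (\<lambda>_. FVar 0) M)) = length (leaves M)"
  by (induction M) auto

lemma skel_len: "fsubst (\<lambda>_. FVar 0) A = fsubst (\<lambda>_. FVar 0) B \<Longrightarrow> length (leaves A) = length (leaves B)"
  by (metis length_leaves_skel)

lemma fsubst_skel:
  "fsubst (\<lambda>_. FVar 0) A = fsubst (\<lambda>_. FVar 0) B \<Longrightarrow> list_all2 (\<lambda>x y. f x = g y) (leaves A) (leaves B)
   \<Longrightarrow> fsubst f A = fsubst g B"
proof (induction A arbitrary: B)
qed (case_tac B; auto simp: list_all2_append dest!: skel_len)+

lemma fo_leaves: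
  "fo_ext L V \<Longrightarrow> set (leaves V) \<subseteq> dom L"
  "fo_list L W \<Longrightarrow> set (leaves W) \<subseteq> dom L"
  by (induction rule: fo_ext_fo_list.inducts) auto

lemma exec_gate_other: "j \<noteq> i \<Longrightarrow> exec_gate (Gate i cs) v j = v j" by simp

lemma exec_gates_notin: "j \<notin> wires C \<Longrightarrow> exec_gates C v j = v j"
proof (induction C)
  case Nil then show ?case by (simp add: exec_gates_def)
next
  case (Cons g C) then show ?case
    by (cases g) (auto simp: exec_gates_def wires_def)
qed

lemma final_val_Cons: "final_val n (g # C) u = exec_gate g (final_val n C u)"
  by (simp add: final_val_def exec_gates_def)

lemma final_val_append: "final_val n (G @ C) u = exec_gates G (final_val n C u)"
  by (simp add: final_val_def exec_gates_def)

lemma final_val_new: "new_wire n C L i \<Longrightarrow> final_val n C u i = False"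
  by (auto simp: final_val_def new_wire_def exec_gates_notin)

definition ifgates :: "nat \<Rightarrow> (nat \<Rightarrow> nat) \<Rightarrow> (nat \<times> nat \<times> nat) list \<Rightarrow> gate list" where
  "ifgates a g xs = concat (map (\<lambda>(w, vj, wj). [Gate w [(True, a), (True, g vj)],
                                       Gate w [(False, a), (True, g wj)]]) xs)"

lemma ifgates_other: "j \<notin> fst ` set xs \<Longrightarrow> exec_gates (ifgates a g xs) v j = v j"
  by (induction xs) (auto simp: ifgates_def exec_gates_def)

lemma ifgates_val:
  assumes "distinct (map fst xs)" "a \<notin> fst ` set xs"
    "\<forall>(w,p,q)\<in>set xs. \<forall>(w',p',q')\<in>set xs. w \<noteq> g p' \<and> w \<noteq> g q'"
    "(w,p,q) \<in> set xs"
  shows "exec_gates (ifgates a g xs) v w = (v w \<noteq> (if v a then v (g p) else v (g q)))"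
  using assms
proof (induction xs)
  case Nil then show ?case by simp
next
  case (Cons t xs)
  obtain w0 p0 q0 where t: "t = (w0,p0,q0)" by (cases t)
  define r where "r = exec_gates (ifgates a g xs) v"
  have eq: "exec_gates (ifgates a g (t # xs)) v =
     exec_gate (Gate w0 [(True, a), (True, g p0)]) (exec_gate (Gate w0 [(False, a), (True, g q0)]) r)"
    by (simp add: t r_def ifgates_def exec_gates_def)
  show ?case
  proof (cases "w = w0")
    case True
    with Cons.prems t have pq: "p = p0" "q = q0" by force+
    have "r w0 = v w0" "r a = v a" "r (g p0) = v (g p0)" "r (g q0) = v (g q0)"
      using Cons.prems t unfolding r_def by (auto intro!: ifgates_other)
    moreover have "w0 \<noteq> a" "w0 \<noteq> g p0" "w0 \<noteq> g q0" using Cons.prems t by auto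
    ultimately show ?thesis using True pq eq by auto
  next
    case False
    with Cons.prems t have "(w,p,q) \<in> set xs" by auto
    moreover have "distinct (map fst xs)" "a \<notin> fst ` set xs"
      "\<forall>(w,p,q)\<in>set xs. \<forall>(w',p',q')\<in>set xs. w \<noteq> g p' \<and> w \<noteq> g q'"
      using Cons.prems by auto
    ultimately have "r w = (v w \<noteq> (if v a then v (g p) else v (g q)))"
      unfolding r_def using Cons.IH by blast
    then show ?thesis using eq False by simp
  qed
qed


lemma readback_rf: "readback n C L M u = fsubst (rf L (final_val n C u)) M"
  unfolding readback_def Let_def by (rule arg_cong[where f="\<lambda>h. fsubst h M"]) (auto simp: rf_def fun_eq_iff split: option.split)

lemma rf_agree:
  assumes "\<forall>x\<in>dom L. L' x = L x" "\<forall>w\<in>ran L. v' w = v w"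
  shows "\<forall>x\<in>dom L. rf L' v' x = rf L v x"
  using assms by (auto simp: rf_def ranI)

theorem lemma1:
  fixes n k m :: nat and M N :: tm and C C' :: "gate list" and L L' :: "nat \<rightharpoonup> nat"
    and kd :: step_kind and u :: "nat \<Rightarrow> bool"
  assumes "is_machine n k m M C L"
    and "am_step n (M, C, L) kd (N, C', L')"
  shows "(kd = ConstElim \<and> readback n C L M u = readback n C' L' N u)
         \<or> step (readback n C L M u) (readback n C' L' N u)
         \<or> has_err N"
proof -
  from assms(2) obtain E R R' where M: "M = plug E R" and N: "N = plug E R'"
    and red: "am_redex n (R,C,L) kd (R',C',L')"
    by (cases rule: am_step.cases) auto
  have domL: "dom L = fvs M" using assms(1) by (simp add: is_machine_def)
  hence EL: "set (cleaves E) \<subseteq> dom L" and RL: "set (leaves R) \<subseteq> dom L"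
    using leaves_plug[of E R] by (auto simp: fvs_def M)
  define v where "v = final_val n C u"
  define v' where "v' = final_val n C' u"
  define f where "f = rf L v"
  define f' where "f' = rf L' v'"
  have rbM: "readback n C L M u = plug (cfsubst f E) (fsubst f R)"
    by (simp add: readback_rf M fsubst_plug f_def v_def)
  have rbN: "readback n C' L' N u = plug (cfsubst f' E) (fsubst f' R')"
    by (simp add: readback_rf N fsubst_plug f'_def v'_def)
  have ctx: "cfsubst f' E = cfsubst f E" if "\<forall>x\<in>dom L. f' x = f x"
    using that EL by (intro cfsubst_cong) auto
  have stepI: "step (plug E' A) (plug E' B)" if "redex A B" for E' A B
    using that by (rule step.intros)
  from red show ?thesis
  proof cases
    case (am_pure)
    then have "f' = f" by (simp add: f_def f'_def v_def v'_def)
    moreover have "pure_redex (fsubst f R) (fsubst f R')"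
      using am_pure by (intro pure_redex_fsubst) (auto simp: f_def)
    ultimately show ?thesis using rbM rbN by (auto intro: stepI redex.intros)
  next
    case (am_ff i0)
    have v': "v' = v" using am_ff by (simp add: v_def v'_def)
    have "\<forall>x\<in>dom L. f' x = f x" unfolding f_def f'_def
      by (rule rf_agree) (use am_ff v' in auto)
    moreover have "f' i0 = Ff" using am_ff v' final_val_new[of n C L i0 u]
      by (simp add: f'_def rf_def v_def)
    ultimately show ?thesis using rbM rbN ctx am_ff by simp
  next
    case (am_tt i0)
    have v': "v' = exec_gate (Gate i0 []) v" using am_tt by (simp add: v_def v'_def final_val_Cons)
    have nr: "i0 \<notin> ran L" using am_tt by (simp add: new_wire_def)
    have "\<forall>x\<in>dom L. f' x = f x" unfolding f_def f'_def
      by (rule rf_agree) (use am_tt v' nr in auto)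
    moreover have "f' i0 = Tt" using am_tt v' final_val_new[of n C L i0 u]
      by (simp add: f'_def rf_def v_def)
    ultimately show ?thesis using rbM rbN ctx am_tt by simp
  next
    case (am_not i0 x a)
    have v': "v' = exec_gate (Gate i0 [(False, a)]) v" using am_not by (simp add: v_def v'_def final_val_Cons)
    have nr: "i0 \<notin> ran L" using am_not by (simp add: new_wire_def)
    have ar: "a \<in> ran L" using am_not by (auto intro: ranI)
    have "\<forall>x\<in>dom L. f' x = f x" unfolding f_def f'_def
      by (rule rf_agree) (use am_not v' nr in auto)
    moreover have "f' i0 = bconst (\<not> v a)" using am_not v' final_val_new[of n C L i0 u] nr ar
      by (auto simp: f'_def rf_def v_def)
    moreover have "f x = bconst (v a)" using am_not by (simp add: f_def rf_def)
    ultimately show ?thesis using rbM rbN ctx am_not by (auto intro: stepI redex.intros)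
  next
    case (am_and i0 x a y b)
    have v': "v' = exec_gate (Gate i0 [(True, a), (True, b)]) v" using am_and by (simp add: v_def v'_def final_val_Cons)
    have nr: "i0 \<notin> ran L" using am_and by (simp add: new_wire_def)
    have ar: "a \<in> ran L" "b \<in> ran L" using am_and by (auto intro: ranI)
    have "\<forall>x\<in>dom L. f' x = f x" unfolding f_def f'_def
      by (rule rf_agree) (use am_and v' nr in auto)
    moreover have "f' i0 = bconst (v a \<and> v b)" using am_and v' final_val_new[of n C L i0 u] nr ar
      by (auto simp: f'_def rf_def v_def)
    moreover have "f x = bconst (v a)" "f y = bconst (v b)" using am_and by (simp_all add: f_def rf_def)
    ultimately show ?thesis using rbM rbN ctx am_and by (auto intro: stepI redex.intros)
  next
    case (am_xor i0 x a y b)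
    have v': "v' = exec_gate (Gate i0 [(True, a)]) (exec_gate (Gate i0 [(True, b)]) v)"
      using am_xor by (simp add: v_def v'_def final_val_Cons)
    have nr: "i0 \<notin> ran L" using am_xor by (simp add: new_wire_def)
    have ar: "a \<in> ran L" "b \<in> ran L" using am_xor by (auto intro: ranI)
    have "\<forall>x\<in>dom L. f' x = f x" unfolding f_def f'_def
      by (rule rf_agree) (use am_xor v' nr in auto)
    moreover have "f' i0 = bconst (v a \<noteq> v b)" using am_xor v' final_val_new[of n C L i0 u] nr ar
      by (auto simp: f'_def rf_def v_def) (cases "final_val n C u a"; simp)
    moreover have fxy: "f x = bconst (v a)" "f y = bconst (v b)" using am_xor by (simp_all add: f_def rf_def)
    ultimately have rM: "readback n C L M u = plug (cfsubst f E) (App Xor (Pair (bconst (v a)) (bconst (v b))))"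
      and rN: "readback n C' L' N u = plug (cfsubst f E) (bconst (v a \<noteq> v b))"
      using rbM rbN ctx am_xor by (simp_all only: fsubst.simps)
    have st: "step (plug (cfsubst f E) (App Xor (Pair (bconst (v a)) (bconst (v b))))) (plug (cfsubst f E) (bconst (v a \<noteq> v b)))"
      by (intro stepI redex.intros)
    show ?thesis unfolding rM rN using st by blast
  next
    case (am_if_err x a V W)
    then show ?thesis using N has_err_plug by simp
  next
    case (am_if x a V W us ws)
    define g where "g = (\<lambda>z. the (L z))"
    define xs where "xs = zip ws (zip (leaves V) (leaves W))"
    have C': "C' = ifgates a g xs @ C" using am_if by (simp add: ifgates_def g_def xs_def)
    have v': "v' = exec_gates (ifgates a g xs) v" by (simp add: v_def v'_def C' final_val_append)
    have lenUV: "length (leaves R') = length (leaves V)"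
      using am_if by (intro skel_len) (simp add: skel_def)
    have lenVW: "length (leaves V) = length (leaves W)"
      using am_if by (intro skel_len) (simp add: skel_def same_shape_def)
    have lus: "length us = length ws" "length (leaves V) = length ws" "length (leaves W) = length ws"
      using am_if lenUV lenVW by auto
    have fsxs: "map fst xs = ws" using lus by (simp add: xs_def)
    have VL: "set (leaves V) \<subseteq> dom L" "set (leaves W) \<subseteq> dom L"
      using am_if fo_leaves by auto
    have wsnr: "\<forall>w\<in>set ws. w \<notin> ran L" using am_if by (auto simp: new_wire_def)
    have ar: "a \<in> ran L" using am_if by (auto intro: ranI)
    have gr: "g z \<in> ran L" if "z \<in> dom L" for z using that by (auto simp: g_def intro: ranI)
    have sxs: "set xs \<subseteq> set ws \<times> (set (leaves V) \<times> set (leaves W))"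
      unfolding xs_def by (auto dest: set_zip_leftD set_zip_rightD)
    have c1: "distinct (map fst xs)" using fsxs am_if by simp
    have c2: "a \<notin> fst ` set xs" using fsxs ar wsnr by (metis set_map)
    have c3: "\<forall>(w,p,q)\<in>set xs. \<forall>(w',p',q')\<in>set xs. w \<noteq> g p' \<and> w \<noteq> g q'"
    proof (intro ballI, clarify)
      fix w p q w' p' q' assume h: "(w,p,q)\<in>set xs" "(w',p',q')\<in>set xs"
      have "w \<in> set ws" "p' \<in> dom L" "q' \<in> dom L" using h(1) h(2) sxs VL by auto
      then show "w \<noteq> g p' \<and> w \<noteq> g q'" using gr wsnr by metis
    qed
    have L'eq: "L' = L ++ map_of (zip us ws)" using am_if by blast
    have disj: "set us \<inter> dom L = {}" using am_if by blast
    have vold: "v' w = v w" if "w \<in> ran L" for w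
      unfolding v' using that wsnr fsxs by (intro ifgates_other) (metis set_map)
    have "\<forall>x\<in>dom L. f' x = f x" unfolding f_def f'_def
    proof (rule rf_agree)
      show "\<forall>w\<in>ran L. v' w = v w" using vold by blast
      show "\<forall>x\<in>dom L. L' x = L x"
      proof
        fix x assume "x \<in> dom L"
        hence "x \<notin> dom (map_of (zip us ws))" using disj lus(1) by (simp add: dom_map_of_zip) blast
        thus "L' x = L x" unfolding L'eq by (simp add: map_add_def domIff split: option.split)
      qed
    qed
    hence ctxeq: "cfsubst f' E = cfsubst f E" by (rule ctx)
    have newval: "v' (ws ! j) = (if v a then v (g (leaves V ! j)) else v (g (leaves W ! j)))"
      if j: "j < length ws" for j
    proof -
      have "(ws ! j, leaves V ! j, leaves W ! j) \<in> set xs"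
      proof -
        have "xs ! j = (ws ! j, leaves V ! j, leaves W ! j)" using j lus by (simp add: xs_def)
        moreover have "j < length xs" using j lus by (simp add: xs_def)
        ultimately show ?thesis by (metis nth_mem)
      qed
      hence "v' (ws ! j) = (v (ws ! j) \<noteq> (if v a then v (g (leaves V ! j)) else v (g (leaves W ! j))))"
        unfolding v' by (intro ifgates_val c1 c2 c3)
      moreover have "v (ws ! j) = False" using am_if j final_val_new[of n C L "ws ! j" u]
        by (simp add: v_def)
      ultimately show ?thesis by simp
    qed
    have f'u: "f' (us ! j) = bconst (v' (ws ! j))" if "j < length ws" for j
    proof -
      have "map_of (zip us ws) (us ! j) = Some (ws ! j)"
        using am_if lus that by (intro map_of_zip_nth) auto
      thus ?thesis using am_if by (simp add: f'_def rf_def)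
    qed
    have fz: "f z = bconst (v (g z))" if "z \<in> dom L" for z
      using that by (auto simp: f_def rf_def g_def)
    have fx: "f x = bconst (v a)" using am_if by (simp add: f_def rf_def)
    show ?thesis
    proof (cases "v a")
      case True
      have "fsubst f' R' = fsubst f V"
      proof (rule fsubst_skel)
        show "fsubst (\<lambda>_. FVar 0) R' = fsubst (\<lambda>_. FVar 0) V" using am_if by (simp add: skel_def)
        show "list_all2 (\<lambda>x y. f' x = f y) (leaves R') (leaves V)"
          unfolding list_all2_conv_all_nth
        proof (intro conjI allI impI)
          have lu: "leaves R' = us" using am_if by blast
          show "length (leaves R') = length (leaves V)" using lu lus by simp
          fix j assume j: "j < length (leaves R')"
          have j': "j < length ws" using j lu lus by simp
          have "j < length (leaves V)" using j' lus by simp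
          hence "leaves V ! j \<in> set (leaves V)" by (rule nth_mem)
          hence "leaves V ! j \<in> dom L" using VL by blast
          then show "f' (leaves R' ! j) = f (leaves V ! j)"
            using f'u[OF j'] newval[OF j'] fz True lu by simp
        qed
      qed
      then show ?thesis using rbM rbN ctxeq am_if fx True by (auto intro: stepI redex.intros)
    next
      case False
      have "fsubst f' R' = fsubst f W"
      proof (rule fsubst_skel)
        show "fsubst (\<lambda>_. FVar 0) R' = fsubst (\<lambda>_. FVar 0) W" using am_if by (simp add: skel_def same_shape_def)
        show "list_all2 (\<lambda>x y. f' x = f y) (leaves R') (leaves W)"
          unfolding list_all2_conv_all_nth
        proof (intro conjI allI impI)
          have lu: "leaves R' = us" using am_if by blast
          show "length (leaves R') = length (leaves W)" using lu lus by simp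
          fix j assume j: "j < length (leaves R')"
          have j': "j < length ws" using j lu lus by simp
          have "j < length (leaves W)" using j' lus by simp
          hence "leaves W ! j \<in> set (leaves W)" by (rule nth_mem)
          hence "leaves W ! j \<in> dom L" using VL by blast
          then show "f' (leaves R' ! j) = f (leaves W ! j)"
            using f'u[OF j'] newval[OF j'] fz False lu by simp
        qed
      qed
      then show ?thesis using rbM rbN ctxeq am_if fx False by (auto intro: stepI redex.intros)
    qed
  qed
qed

end
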